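(* Let $X=[n]$, $\mathcal{A}\subseteq X^{(r)}$ and $\mathcal{B}=X^{(r)}\setminus\mathcal{A}$. Suppose that $\partial^{-t}\mathcal{A}$ and $\partial^{+t}\mathcal{B}$ are minimal for all integers $t>0$. Then $\mathcal{A}$ is isomorphic to an initial segment of the colexicographic order on $X^{(r)}$.
   Context: $X^{(r)}=\{B\subseteq[n]:|B|=r\}$. Lower shadow: $\partial\mathcal{F}=\partial^{-}\mathcal{F}=\{B: B\cup\{i\}\in\mathcal{F}\text{ for some } i\notin B\}$, and $\partial^{-t}\mathcal{F}=\partial(\partial^{-(t-1)}\mathcal{F})$. Upper shadow: $\partial^{+}\mathcal{F}=\{B\cup\{i\}: i\in[n]\setminus B,\ B\in\mathcal{F}\}$, and $\partial^{+t}\mathcal{F}=\partial^{+}(\partial^{+(t-1)}\mathcal{F})$. For $\mathcal{F}\subseteq X^{(r)}$, $\partial^{\pm t}\mathcal{F}$ is minimal if $|\partial^{\pm t}\mathcal{F}|\le|\partial^{\pm t}\mathcal{G}|$ for every $\mathcal{G}\subseteq X^{(r)}$ with $|\mathcal{G}|=|\mathcal{F}|$. Colexicographic order: $A<_{colex}B$ iff $\max(A\Delta B)\in B$. $\mathcal{A}$ is isomorphic to $\mathcal{C}$ if there is a permutation $\sigma$ of $[n]$ with $\{\sigma(A):A\in\mathcal{A}\}=\mathcal{C}$. *)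

theory Defs
  imports Main "HOL-Combinatorics.Permutations"
begin

definition layer :: "nat \<Rightarrow> nat \<Rightarrow> nat set set" where
  "layer n r = {B. B \<subseteq> {1..n} \<and> card B = r}"

definition lower_shadow :: "nat set set \<Rightarrow> nat set set" where
  "lower_shadow F = {B. \<exists>i. i \<notin> B \<and> insert i B \<in> F}"

definition upper_shadow :: "nat \<Rightarrow> nat set set \<Rightarrow> nat set set" where
  "upper_shadow n F = {insert i B | B i. B \<in> F \<and> i \<in> {1..n} - B}"

definition lower_shadow_iter :: "nat \<Rightarrow> nat set set \<Rightarrow> nat set set" where
  "lower_shadow_iter t F = (lower_shadow ^^ t) F"

definition upper_shadow_iter :: "nat \<Rightarrow> nat \<Rightarrow> nat set set \<Rightarrow> nat set set" where
  "upper_shadow_iter n t F = (upper_shadow n ^^ t) F"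

definition lower_shadow_minimal :: "nat \<Rightarrow> nat \<Rightarrow> nat \<Rightarrow> nat set set \<Rightarrow> bool" where
  "lower_shadow_minimal n r t F \<longleftrightarrow>
     (\<forall>G. G \<subseteq> layer n r \<and> card G = card F \<longrightarrow>
          card (lower_shadow_iter t F) \<le> card (lower_shadow_iter t G))"

definition upper_shadow_minimal :: "nat \<Rightarrow> nat \<Rightarrow> nat \<Rightarrow> nat set set \<Rightarrow> bool" where
  "upper_shadow_minimal n r t F \<longleftrightarrow>
     (\<forall>G. G \<subseteq> layer n r \<and> card G = card F \<longrightarrow>
          card (upper_shadow_iter n t F) \<le> card (upper_shadow_iter n t G))"

definition colex_less :: "nat set \<Rightarrow> nat set \<Rightarrow> bool" where
  "colex_less A B \<longleftrightarrow> A \<noteq> B \<and> Max ((A - B) \<union> (B - A)) \<in> B"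

definition colex_initial_segment :: "nat \<Rightarrow> nat \<Rightarrow> nat set set \<Rightarrow> bool" where
  "colex_initial_segment n r C \<longleftrightarrow>
     C \<subseteq> layer n r \<and> (\<forall>B\<in>C. \<forall>A\<in>layer n r. colex_less A B \<longrightarrow> A \<in> C)"

definition family_iso :: "nat \<Rightarrow> nat set set \<Rightarrow> nat set set \<Rightarrow> bool" where
  "family_iso n A C \<longleftrightarrow> (\<exists>\<sigma>. \<sigma> permutes {1..n} \<and> (\<lambda>S. \<sigma> ` S) ` A = C)"

end

theory Submission
  imports Defs
begin

definition low :: "nat \<Rightarrow> nat set set \<Rightarrow> nat set set" where
  "low k F = {s. card s = k \<and> (\<exists>f\<in>F. s \<subseteq> f)}"

definition up :: "nat \<Rightarrow> nat \<Rightarrow> nat set set \<Rightarrow> nat set set" where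
  "up n k F = {s. s \<subseteq> {1..n} \<and> card s = k \<and> (\<exists>f\<in>F. f \<subseteq> s)}"

definition pimg :: "(nat \<Rightarrow> nat) \<Rightarrow> nat set set \<Rightarrow> nat set set" where
  "pimg \<sigma> F = (\<lambda>S. \<sigma> ` S) ` F"

definition lowmin :: "nat \<Rightarrow> nat \<Rightarrow> nat set set \<Rightarrow> bool" where
  "lowmin n r A \<longleftrightarrow> (\<forall>k\<le>r. \<forall>G. G \<subseteq> layer n r \<and> card G = card A \<longrightarrow> card (low k A) \<le> card (low k G))"

definition upmin :: "nat \<Rightarrow> nat \<Rightarrow> nat set set \<Rightarrow> bool" where
  "upmin n r B \<longleftrightarrow> (\<forall>k\<ge>r. \<forall>G. G \<subseteq> layer n r \<and> card G = card B \<longrightarrow> card (up n k B) \<le> card (up n k G))"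

lemma layer_finite: "finite (layer n r)"
  by (rule finite_subset[of _ "Pow {1..n}"]) (auto simp: layer_def)

lemma layer_mem_finite: "f \<in> layer n r \<Longrightarrow> finite f"
  by (auto simp: layer_def intro: finite_subset)

lemma layerD: "f \<in> layer n r \<Longrightarrow> finite f \<and> card f = r \<and> f \<subseteq> {1..n}"
  using layer_mem_finite[of f n r] by (simp add: layer_def)

lemma low_finite: "finite F \<Longrightarrow> F \<subseteq> layer n r \<Longrightarrow> finite (low k F)"
  by (rule finite_subset[of _ "\<Union>f\<in>F. Pow f"]) (auto simp: low_def layer_mem_finite)

lemma up_finite: "finite (up n k F)"
  by (rule finite_subset[of _ "Pow {1..n}"]) (auto simp: up_def)

lemma lsi_eq: "F \<subseteq> layer n r \<Longrightarrow> t \<le> r \<Longrightarrow> lower_shadow_iter t F = low (r - t) F"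
proof (induction t)
  case 0
  have "low r F = F"
  proof
    show "low r F \<subseteq> F"
    proof
      fix s assume "s \<in> low r F"
      then obtain f where f: "f \<in> F" "s \<subseteq> f" "card s = r" by (auto simp: low_def)
      have "finite f" "card f = r" using 0 f(1) layerD by blast+
      then have "s = f" using f card_subset_eq by metis
      then show "s \<in> F" using f by simp
    qed
    show "F \<subseteq> low r F" using 0 by (auto simp: low_def layer_def)
  qed
  then show ?case by (simp add: lower_shadow_iter_def)
next
  case (Suc t)
  have IH: "lower_shadow_iter t F = low (r - t) F" using Suc by simp
  have "lower_shadow (low (r - t) F) = low (r - Suc t) F"
  proof
    show "lower_shadow (low (r - t) F) \<subseteq> low (r - Suc t) F"
    proof
      fix B assume "B \<in> lower_shadow (low (r - t) F)"
      then obtain i f where i: "i \<notin> B" "card (insert i B) = r - t" "f \<in> F" "insert i B \<subseteq> f"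
        by (auto simp: lower_shadow_def low_def)
      have "finite f" using Suc.prems i(3) layerD by blast
      then have "finite B" by (rule finite_subset[rotated]) (use i in auto)
      then have "card B = r - Suc t" using i by simp
      then show "B \<in> low (r - Suc t) F" using i by (auto simp: low_def)
    qed
    show "low (r - Suc t) F \<subseteq> lower_shadow (low (r - t) F)"
    proof
      fix B assume "B \<in> low (r - Suc t) F"
      then obtain f where f: "f \<in> F" "B \<subseteq> f" "card B = r - Suc t" by (auto simp: low_def)
      have ff: "finite f" "card f = r" using Suc.prems f(1) layerD by blast+
      have "card B < card f" using f(3) ff(2) Suc.prems(2) by simp
      then have "B \<noteq> f" by auto
      then obtain i where i: "i \<in> f" "i \<notin> B" using f by blast
      have "finite B" using ff(1) by (rule finite_subset[rotated]) (use f in auto)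
      then have "card (insert i B) = r - t" using i f(3) Suc.prems(2) by simp
      then have "insert i B \<in> low (r - t) F" using f i by (auto simp: low_def)
      then show "B \<in> lower_shadow (low (r - t) F)" using i by (auto simp: lower_shadow_def)
    qed
  qed
  then show ?case using IH by (simp add: lower_shadow_iter_def)
qed

lemma usi_eq: "F \<subseteq> layer n r \<Longrightarrow> upper_shadow_iter n t F = up n (r + t) F"
proof (induction t)
  case 0
  have "up n r F = F"
  proof
    show "up n r F \<subseteq> F"
    proof
      fix s assume "s \<in> up n r F"
      then obtain f where f: "f \<in> F" "f \<subseteq> s" "card s = r" "s \<subseteq> {1..n}" by (auto simp: up_def)
      have "finite s" by (rule finite_subset[OF f(4)]) simp
      have "card f = r" using 0 f(1) by (auto simp: layer_def)
      then have "s = f" using f card_subset_eq \<open>finite s\<close> by metis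
      then show "s \<in> F" using f by simp
    qed
    show "F \<subseteq> up n r F" using 0 by (auto simp: up_def layer_def)
  qed
  then show ?case by (simp add: upper_shadow_iter_def)
next
  case (Suc t)
  have IH: "upper_shadow_iter n t F = up n (r + t) F" using Suc by simp
  have "upper_shadow n (up n (r + t) F) = up n (r + Suc t) F"
  proof
    show "upper_shadow n (up n (r + t) F) \<subseteq> up n (r + Suc t) F"
    proof
      fix s assume "s \<in> upper_shadow n (up n (r + t) F)"
      then obtain B i f where i: "s = insert i B" "B \<subseteq> {1..n}" "card B = r + t" "f \<in> F" "f \<subseteq> B"
          "i \<in> {1..n}" "i \<notin> B"
        by (auto simp: upper_shadow_def up_def)
      have "finite B" by (rule finite_subset[OF i(2)]) simp
      then show "s \<in> up n (r + Suc t) F" using i by (auto simp: up_def)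
    qed
    show "up n (r + Suc t) F \<subseteq> upper_shadow n (up n (r + t) F)"
    proof
      fix s assume "s \<in> up n (r + Suc t) F"
      then obtain f where f: "f \<in> F" "f \<subseteq> s" "card s = r + Suc t" "s \<subseteq> {1..n}" by (auto simp: up_def)
      have fs: "finite s" by (rule finite_subset[OF f(4)]) simp
      have cf: "card f = r" using f Suc by (auto simp: layer_def)
      have "f \<noteq> s" using cf f by auto
      then obtain i where i: "i \<in> s" "i \<notin> f" using f by blast
      have "card (s - {i}) = r + t" using i fs f by simp
      then have "s - {i} \<in> up n (r + t) F" unfolding up_def using f i by blast
      moreover have "s = insert i (s - {i})" using i by auto
      ultimately show "s \<in> upper_shadow n (up n (r + t) F)"
        unfolding upper_shadow_def
        by (intro CollectI exI[of _ "s - {i}"] exI[of _ i] conjI) (use i f in auto)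
    qed
  qed
  then show ?case using IH by (simp add: upper_shadow_iter_def)
qed


lemma inj_image_set: "inj \<sigma> \<Longrightarrow> inj (\<lambda>S. \<sigma> ` S)"
  by (auto simp: inj_on_def inj_image_eq_iff)

lemma pimg_card: "inj \<sigma> \<Longrightarrow> card (pimg \<sigma> F) = card F"
  unfolding pimg_def by (rule card_image) (rule inj_on_subset[OF inj_image_set], auto)

lemma pimg_diff: "inj \<sigma> \<Longrightarrow> pimg \<sigma> (X - Y) = pimg \<sigma> X - pimg \<sigma> Y"
  unfolding pimg_def by (rule image_set_diff[OF inj_image_set])

lemma pimg_comp: "pimg (f \<circ> g) F = pimg f (pimg g F)"
  unfolding pimg_def by (auto simp: image_comp)

context
  fixes \<sigma> :: "nat \<Rightarrow> nat" and n :: nat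
  assumes p: "\<sigma> permutes {1..n}"
begin

lemma p_inj: "inj \<sigma>" using p permutes_inj by blast
lemma p_inv_inj: "inj (inv \<sigma>)" using permutes_inv[OF p] permutes_inj by blast
lemma p_ff: "\<sigma> ` (inv \<sigma> ` s) = s" by (simp add: image_comp permutes_inv_o(1)[OF p])
lemma p_ff2: "inv \<sigma> ` (\<sigma> ` s) = s" by (simp add: image_comp permutes_inv_o(2)[OF p])
lemma p_card: "card (\<sigma> ` s) = card s"
  by (rule card_image) (rule inj_on_subset[OF p_inj], simp)
lemma p_inv_card: "card (inv \<sigma> ` s) = card s"
  by (rule card_image) (rule inj_on_subset[OF p_inv_inj], simp)
lemma p_sub: "(\<sigma> ` s \<subseteq> {1..n}) = (s \<subseteq> {1..n})"
  using permutes_in_image[OF p] by auto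
lemma p_inv_sub: "(inv \<sigma> ` s \<subseteq> {1..n}) = (s \<subseteq> {1..n})"
  using permutes_in_image[OF permutes_inv[OF p]] by auto
lemma p_subset_iff: "(\<sigma> ` s \<subseteq> \<sigma> ` f) = (s \<subseteq> f)"
  using p_inj by (simp add: inj_image_subset_iff)

lemma pimg_layer_sub: "F \<subseteq> layer n r \<Longrightarrow> pimg \<sigma> F \<subseteq> layer n r"
proof
  fix s assume "F \<subseteq> layer n r" "s \<in> pimg \<sigma> F"
  then obtain f where f: "f \<in> layer n r" "s = \<sigma> ` f" unfolding pimg_def by blast
  then show "s \<in> layer n r" using p_sub[of f] p_card[of f] by (simp add: layer_def)
qed

lemma pimg_layer: "pimg \<sigma> (layer n r) = layer n r"
proof
  show "pimg \<sigma> (layer n r) \<subseteq> layer n r" by (rule pimg_layer_sub) simp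
  show "layer n r \<subseteq> pimg \<sigma> (layer n r)"
  proof
    fix s assume s: "s \<in> layer n r"
    have "inv \<sigma> ` s \<in> layer n r" using s p_inv_sub p_inv_card by (simp add: layer_def)
    then show "s \<in> pimg \<sigma> (layer n r)" unfolding pimg_def using p_ff[of s] by (metis image_eqI)
  qed
qed

lemma low_pimg: "low k (pimg \<sigma> F) = pimg \<sigma> (low k F)"
proof
  show "low k (pimg \<sigma> F) \<subseteq> pimg \<sigma> (low k F)"
  proof
    fix s assume "s \<in> low k (pimg \<sigma> F)"
    then obtain f where f: "f \<in> F" "s \<subseteq> \<sigma> ` f" "card s = k" by (auto simp: low_def pimg_def)
    have "inv \<sigma> ` s \<subseteq> f" using f(2) p_subset_iff p_ff by metis
    then have "inv \<sigma> ` s \<in> low k F" using f p_inv_card unfolding low_def by blast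
    then show "s \<in> pimg \<sigma> (low k F)" unfolding pimg_def using p_ff[of s] by (metis image_eqI)
  qed
  show "pimg \<sigma> (low k F) \<subseteq> low k (pimg \<sigma> F)"
    unfolding pimg_def low_def using p_card p_subset_iff by fastforce
qed

lemma up_pimg: "up n k (pimg \<sigma> F) = pimg \<sigma> (up n k F)"
proof
  show "up n k (pimg \<sigma> F) \<subseteq> pimg \<sigma> (up n k F)"
  proof
    fix s assume "s \<in> up n k (pimg \<sigma> F)"
    then obtain f where f: "f \<in> F" "\<sigma> ` f \<subseteq> s" "card s = k" "s \<subseteq> {1..n}" by (auto simp: up_def pimg_def)
    have "f \<subseteq> inv \<sigma> ` s" using f(2) p_subset_iff p_ff by metis
    then have "inv \<sigma> ` s \<in> up n k F" using f p_inv_card p_inv_sub unfolding up_def by blast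
    then show "s \<in> pimg \<sigma> (up n k F)" unfolding pimg_def using p_ff[of s] by (metis image_eqI)
  qed
  show "pimg \<sigma> (up n k F) \<subseteq> up n k (pimg \<sigma> F)"
    unfolding pimg_def up_def using p_card p_subset_iff p_sub by fastforce
qed

lemma lowmin_pimg: "lowmin n r A \<Longrightarrow> lowmin n r (pimg \<sigma> A)"
  unfolding lowmin_def low_pimg pimg_card[OF p_inj] by blast

lemma upmin_pimg: "upmin n r B \<Longrightarrow> upmin n r (pimg \<sigma> B)"
  unfolding upmin_def up_pimg pimg_card[OF p_inj] by blast

lemma layer_diff_pimg: "layer n r - pimg \<sigma> A = pimg \<sigma> (layer n r - A)"
  using pimg_diff[OF p_inj] pimg_layer by metis

end

lemma extend_subset:
  assumes "finite S" "s \<subseteq> S" "card s \<le> k" "k \<le> card S"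
  shows "\<exists>t. s \<subseteq> t \<and> t \<subseteq> S \<and> card t = k"
proof -
  have fs: "finite s" using assms(1,2) finite_subset by blast
  have "card (S - s) = card S - card s" using assms(1,2) fs by (simp add: card_Diff_subset)
  then have "k - card s \<le> card (S - s)" using assms by simp
  then obtain u where u: "u \<subseteq> S - s" "card u = k - card s" "finite u"
    by (rule obtain_subset_with_card_n)
  have "card (s \<union> u) = card s + card u" using u fs by (intro card_Un_disjoint) auto
  then have "card (s \<union> u) = k" using u assms by simp
  then show ?thesis using u assms(2) by (intro exI[of _ "s \<union> u"]) auto
qed

lemma layer_m_notin: "s \<in> layer m r \<Longrightarrow> Suc m \<notin> s"
  by (auto simp: layer_def)

lemma layer_mono: "layer m r \<subseteq> layer (Suc m) r"
  by (auto simp: layer_def)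

lemma ins_layer: "t \<in> layer m j \<Longrightarrow> insert (Suc m) t \<in> layer (Suc m) (Suc j)"
proof -
  assume t: "t \<in> layer m j"
  have h: "finite t" "card t = j" "t \<subseteq> {1..m}" using layerD[OF t] by auto
  have n: "Suc m \<notin> t" using layer_m_notin[OF t] .
  have "insert (Suc m) t \<subseteq> {1..Suc m}" using h(3) by auto
  moreover have "card (insert (Suc m) t) = Suc j" using h n by simp
  ultimately show ?thesis unfolding layer_def by blast
qed

lemma card_ins:
  assumes "\<forall>s\<in>F. Suc m \<notin> s"
  shows "card (insert (Suc m) ` F) = card F"
proof (rule card_image)
  show "inj_on (insert (Suc m)) F"
    unfolding inj_on_def using assms by (metis insert_ident)
qed

lemma layer_down:
  assumes "Suc m \<notin> s" "s \<in> layer (Suc m) r"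
  shows "s \<in> layer m r"
proof -
  have h: "s \<subseteq> {1..Suc m}" "card s = r" using layerD[OF assms(2)] by auto
  have "s \<subseteq> {1..m}"
  proof
    fix y assume "y \<in> s"
    then have "y \<in> {1..Suc m}" "y \<noteq> Suc m" using h assms(1) by auto
    then show "y \<in> {1..m}" by simp
  qed
  then show ?thesis using h by (simp add: layer_def)
qed

lemma layer_Suc_split:
  assumes "r \<ge> 1"
  shows "layer (Suc m) r = layer m r \<union> insert (Suc m) ` layer m (r - 1)"
proof
  show "layer (Suc m) r \<subseteq> layer m r \<union> insert (Suc m) ` layer m (r - 1)"
  proof
    fix s assume s: "s \<in> layer (Suc m) r"
    have fs: "finite s" "card s = r" "s \<subseteq> {1..Suc m}" using layerD[OF s] by auto
    show "s \<in> layer m r \<union> insert (Suc m) ` layer m (r - 1)"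
    proof (cases "Suc m \<in> s")
      case True
      have "s - {Suc m} \<in> layer m (r - 1)" using fs True by (auto simp: layer_def)
      moreover have "s = insert (Suc m) (s - {Suc m})" using True by auto
      ultimately show ?thesis by blast
    next
      case False
      then have "s \<subseteq> {1..m}" using fs(3) by (auto simp: le_Suc_eq)
      then show ?thesis using fs by (auto simp: layer_def)
    qed
  qed
  show "layer m r \<union> insert (Suc m) ` layer m (r - 1) \<subseteq> layer (Suc m) r"
    using layer_mono ins_layer[of _ m "r - 1"] assms by auto
qed

lemma up_split:
  assumes F: "F \<subseteq> layer m r" and r: "1 \<le> r" "r \<le> k"
  shows "up (Suc m) k (F \<union> insert (Suc m) ` layer m (r - 1))
       = up m k F \<union> {s. s \<subseteq> {1..Suc m} \<and> card s = k \<and> Suc m \<in> s}"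
     (is "?L = ?R1 \<union> ?R2")
proof
  show "?L \<subseteq> ?R1 \<union> ?R2"
  proof
    fix s assume "s \<in> ?L"
    then obtain g where g: "s \<subseteq> {1..Suc m}" "card s = k"
      "g \<in> F \<union> insert (Suc m) ` layer m (r - 1)" "g \<subseteq> s"
      unfolding up_def by blast
    show "s \<in> ?R1 \<union> ?R2"
    proof (cases "Suc m \<in> s")
      case True then show ?thesis using g by blast
    next
      case False
      then have g2: "g \<in> F" using g by blast
      have "s \<subseteq> {1..m}" using g(1) False by (auto simp: le_Suc_eq)
      then show ?thesis using g g2 unfolding up_def by blast
    qed
  qed
  show "?R1 \<union> ?R2 \<subseteq> ?L"
  proof
    fix s assume s: "s \<in> ?R1 \<union> ?R2"
    show "s \<in> ?L"
    proof (cases "s \<in> ?R1")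
      case True then show ?thesis unfolding up_def by auto
    next
      case False
      then have s2: "s \<subseteq> {1..Suc m}" "card s = k" "Suc m \<in> s" using s by auto
      have fs: "finite s" by (rule finite_subset[OF s2(1)]) simp
      have "card (s - {Suc m}) = k - 1" using fs s2 by simp
      then have "r - 1 \<le> card (s - {Suc m})" using r by simp
      then obtain t where t: "t \<subseteq> s - {Suc m}" "card t = r - 1" "finite t"
        by (rule obtain_subset_with_card_n)
      have "t \<subseteq> {1..m}" using t(1) s2(1) by (auto simp: subset_iff le_Suc_eq)
      then have "t \<in> layer m (r - 1)" using t by (simp add: layer_def)
      moreover have "insert (Suc m) t \<subseteq> s" using t s2 by auto
      ultimately show ?thesis using s2 unfolding up_def by blast
    qed
  qed
qed

lemma up_ins:
  assumes F: "F \<subseteq> layer m j"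
  shows "up (Suc m) (Suc k) (insert (Suc m) ` F) = insert (Suc m) ` up m k F"
proof
  show "up (Suc m) (Suc k) (insert (Suc m) ` F) \<subseteq> insert (Suc m) ` up m k F"
  proof
    fix s assume "s \<in> up (Suc m) (Suc k) (insert (Suc m) ` F)"
    then obtain f where f: "s \<subseteq> {1..Suc m}" "card s = Suc k" "f \<in> F" "insert (Suc m) f \<subseteq> s"
      unfolding up_def by blast
    have fs: "finite s" by (rule finite_subset[OF f(1)]) simp
    have nf: "Suc m \<notin> f" using F f(3) layer_m_notin by blast
    have "s - {Suc m} \<subseteq> {1..m}" using f(1) by (auto simp: le_Suc_eq)
    moreover have "card (s - {Suc m}) = k" using fs f by simp
    moreover have "f \<subseteq> s - {Suc m}" using f nf by auto
    ultimately have "s - {Suc m} \<in> up m k F" using f(3) unfolding up_def by blast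
    moreover have "s = insert (Suc m) (s - {Suc m})" using f by auto
    ultimately show "s \<in> insert (Suc m) ` up m k F" by blast
  qed
  show "insert (Suc m) ` up m k F \<subseteq> up (Suc m) (Suc k) (insert (Suc m) ` F)"
  proof
    fix s assume "s \<in> insert (Suc m) ` up m k F"
    then obtain t f where t: "s = insert (Suc m) t" "t \<subseteq> {1..m}" "card t = k" "f \<in> F" "f \<subseteq> t"
      unfolding up_def by blast
    have ft: "finite t" by (rule finite_subset[OF t(2)]) simp
    have "Suc m \<notin> t" using t(2) by auto
    then have "card s = Suc k" using t ft by simp
    moreover have "s \<subseteq> {1..Suc m}" using t by auto
    moreover have "insert (Suc m) f \<subseteq> s" using t by auto
    ultimately show "s \<in> up (Suc m) (Suc k) (insert (Suc m) ` F)" using t(4) unfolding up_def by blast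
  qed
qed

lemma low_split:
  assumes F: "F \<subseteq> layer m (r - 1)" and r: "1 \<le> r" "r \<le> m" "Suc j \<le> r"
  shows "low (Suc j) (layer m r \<union> insert (Suc m) ` F)
       = low (Suc j) (layer m r) \<union> insert (Suc m) ` low j F" (is "?L = ?R1 \<union> ?R2")
proof
  show "?L \<subseteq> ?R1 \<union> ?R2"
  proof
    fix s assume "s \<in> ?L"
    then obtain g where g: "card s = Suc j" "g \<in> layer m r \<union> insert (Suc m) ` F" "s \<subseteq> g"
      unfolding low_def by blast
    show "s \<in> ?R1 \<union> ?R2"
    proof (cases "g \<in> layer m r")
      case True then show ?thesis using g unfolding low_def by blast
    next
      case False
      then obtain f where f: "f \<in> F" "g = insert (Suc m) f" using g by blast
      have ff: "finite f" "card f = r - 1" "f \<subseteq> {1..m}" using layerD[of f m "r - 1"] F f(1) by auto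
      have fs: "finite s" by (rule finite_subset[OF g(3)]) (simp add: f(2) ff(1))
      show ?thesis
      proof (cases "Suc m \<in> s")
        case True
        have "card (s - {Suc m}) = j" using True fs g by simp
        moreover have "s - {Suc m} \<subseteq> f" using g(3) f(2) by auto
        ultimately have "s - {Suc m} \<in> low j F" using f(1) unfolding low_def by blast
        moreover have "s = insert (Suc m) (s - {Suc m})" using True by auto
        ultimately show ?thesis by blast
      next
        case False
        then have sf: "s \<subseteq> f" using g(3) f(2) by auto
        then have "s \<subseteq> {1..m}" using ff by auto
        then obtain t where t: "s \<subseteq> t" "t \<subseteq> {1..m}" "card t = r"
          using extend_subset[of "{1..m}" s r] g(1) r by auto
        then have "t \<in> layer m r" by (simp add: layer_def)
        then show ?thesis using t g unfolding low_def by blast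
      qed
    qed
  qed
  show "?R1 \<union> ?R2 \<subseteq> ?L"
  proof
    fix s assume s: "s \<in> ?R1 \<union> ?R2"
    show "s \<in> ?L"
    proof (cases "s \<in> ?R1")
      case True then show ?thesis unfolding low_def by blast
    next
      case False
      then obtain u f where u: "s = insert (Suc m) u" "card u = j" "f \<in> F" "u \<subseteq> f"
        using s unfolding low_def by blast
      have ff: "finite f" "f \<subseteq> {1..m}" using layerD[of f m "r - 1"] F u(3) by auto
      have fu: "finite u" by (rule finite_subset[OF u(4) ff(1)])
      have "Suc m \<notin> u" using u(4) ff(2) by auto
      then have "card s = Suc j" using u fu by simp
      moreover have "s \<subseteq> insert (Suc m) f" using u by auto
      ultimately show ?thesis using u(3) unfolding low_def by blast
    qed
  qed
qed

lemma colex_N: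
  assumes "A \<subseteq> {1..N}" "B \<subseteq> {1..N}" "N \<in> A" "N \<notin> B"
  shows "\<not> colex_less A B"
proof
  assume c: "colex_less A B"
  let ?D = "(A - B) \<union> (B - A)"
  have "?D \<subseteq> {1..N}" using assms(1,2) by blast
  then have fin: "finite ?D" by (rule finite_subset) simp
  have "Max ?D = N"
    by (rule Max_eqI) (use fin assms in auto)
  then show False using c assms unfolding colex_less_def by simp
qed

lemma colex_lift1:
  assumes "colex_initial_segment m r C"
  shows "colex_initial_segment (Suc m) r C"
  unfolding colex_initial_segment_def
proof (intro conjI ballI impI)
  show "C \<subseteq> layer (Suc m) r" using assms layer_mono unfolding colex_initial_segment_def by blast
  fix B A assume B: "B \<in> C" and A: "A \<in> layer (Suc m) r" and c: "colex_less A B"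
  have Bm: "B \<in> layer m r" using B assms unfolding colex_initial_segment_def by blast
  have "Suc m \<notin> A"
  proof
    assume "Suc m \<in> A"
    moreover have "B \<subseteq> {1..Suc m}" "A \<subseteq> {1..Suc m}" using Bm A layer_mono layerD by blast+
    ultimately show False using colex_N c layer_m_notin[OF Bm] by blast
  qed
  then have "A \<in> layer m r" using layerD[OF A] by (auto simp: layer_def le_Suc_eq)
  then show "A \<in> C" using B c assms unfolding colex_initial_segment_def by blast
qed

lemma colex_lift2:
  assumes C: "colex_initial_segment m (r - 1) C" and r: "1 \<le> r"
  shows "colex_initial_segment (Suc m) r (layer m r \<union> insert (Suc m) ` C)"
  unfolding colex_initial_segment_def
proof (intro conjI ballI impI)
  have Cl: "C \<subseteq> layer m (r - 1)" using C unfolding colex_initial_segment_def by blast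
  show "layer m r \<union> insert (Suc m) ` C \<subseteq> layer (Suc m) r"
    using layer_Suc_split[OF r, of m] Cl by blast
  fix B A assume B: "B \<in> layer m r \<union> insert (Suc m) ` C" and A: "A \<in> layer (Suc m) r"
    and c: "colex_less A B"
  have BN: "B \<in> layer (Suc m) r" using B layer_Suc_split[OF r, of m] Cl by blast
  show "A \<in> layer m r \<union> insert (Suc m) ` C"
  proof (cases "Suc m \<in> A")
    case False
    then have "A \<in> layer m r" using layerD[OF A] by (auto simp: layer_def le_Suc_eq)
    then show ?thesis by blast
  next
    case True
    have "Suc m \<in> B" using colex_N[of A "Suc m" B] True c layerD[OF A] layerD[OF BN] by blast
    then obtain b where b: "b \<in> C" "B = insert (Suc m) b" using B layer_m_notin by blast
    have bl: "b \<in> layer m (r - 1)" using b Cl by blast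
    have nb: "Suc m \<notin> b" using layer_m_notin[OF bl] .
    have "A - {Suc m} \<in> layer m (r - 1)" using layerD[OF A] True by (auto simp: layer_def le_Suc_eq)
    moreover have "colex_less (A - {Suc m}) b"
    proof -
      have e: "((A - {Suc m}) - b) \<union> (b - (A - {Suc m})) = (A - B) \<union> (B - A)"
        using b nb True by auto
      have "A - {Suc m} \<noteq> b" using True b c unfolding colex_less_def by auto
      moreover have "Max ((A - B) \<union> (B - A)) \<in> B" using c unfolding colex_less_def by blast
      moreover have "Max ((A - B) \<union> (B - A)) \<noteq> Suc m"
      proof
        assume "Max ((A - B) \<union> (B - A)) = Suc m"
        moreover have "(A - B) \<union> (B - A) \<noteq> {}" using c unfolding colex_less_def by auto
        moreover have "finite ((A - B) \<union> (B - A))" using layerD[OF A] layerD[OF BN] by auto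
        ultimately have "Suc m \<in> (A - B) \<union> (B - A)" using Max_in by metis
        then show False using True \<open>Suc m \<in> B\<close> by blast
      qed
      ultimately show ?thesis unfolding colex_less_def e using b by auto
    qed
    ultimately have "A - {Suc m} \<in> C" using b C unfolding colex_initial_segment_def by blast
    moreover have "A = insert (Suc m) (A - {Suc m})" using True by auto
    ultimately show ?thesis by blast
  qed
qed

lemma colex_trivial:
  assumes "card (layer n r) \<le> 1" "A \<subseteq> layer n r"
  shows "colex_initial_segment n r A"
  unfolding colex_initial_segment_def
proof (intro conjI ballI impI)
  show "A \<subseteq> layer n r" by fact
  fix B C assume "B \<in> A" "C \<in> layer n r" "colex_less C B"
  then have "C \<noteq> B" "B \<in> layer n r" using assms unfolding colex_less_def by auto
  then have "{B, C} \<subseteq> layer n r" using \<open>C \<in> layer n r\<close> by blast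
  then have "card {B, C} \<le> card (layer n r)" by (rule card_mono[OF layer_finite])
  then have "card (layer n r) \<ge> 2" using \<open>C \<noteq> B\<close> by simp
  then show "C \<in> A" using assms by simp
qed

lemma find_x1:
  assumes A: "A \<subseteq> layer (Suc m) r" and lm: "lowmin (Suc m) r A"
    and c: "card A \<le> card (layer m r)" and r: "1 \<le> r"
  shows "\<exists>x\<in>{1..Suc m}. \<forall>f\<in>A. x \<notin> f"
proof -
  obtain G where G: "G \<subseteq> layer m r" "card G = card A" "finite G"
    using obtain_subset_with_card_n[OF c] by metis
  have "G \<subseteq> layer (Suc m) r" using G layer_mono by blast
  then have le: "card (low 1 A) \<le> card (low 1 G)" using lm r G unfolding lowmin_def by blast
  have "low 1 G \<subseteq> (\<lambda>x. {x}) ` {1..m}"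
  proof
    fix s assume "s \<in> low 1 G"
    then obtain g where g: "card s = 1" "g \<in> G" "s \<subseteq> g" unfolding low_def by blast
    then obtain x where x: "s = {x}" using card_1_singletonE by blast
    have "g \<subseteq> {1..m}" using layerD g(2) G(1) by blast
    then show "s \<in> (\<lambda>x. {x}) ` {1..m}" using x g by auto
  qed
  then have "card (low 1 G) \<le> card ((\<lambda>x. {x}) ` {1..m})" by (rule card_mono[rotated]) simp
  also have "\<dots> \<le> m" using card_image_le[of "{1..m}" "\<lambda>x. {x}"] by simp
  finally have le2: "card (low 1 A) \<le> m" using le by linarith
  have fA: "finite A" using A layer_finite finite_subset by blast
  have sub: "(\<lambda>x. {x}) ` (\<Union>A) \<subseteq> low 1 A" unfolding low_def by auto
  have "card ((\<lambda>x. {x}) ` (\<Union>A)) = card (\<Union>A)" by (rule card_image) (auto simp: inj_on_def)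
  moreover have "card ((\<lambda>x. {x}) ` (\<Union>A)) \<le> card (low 1 A)"
    by (rule card_mono[OF low_finite[OF fA A] sub])
  ultimately have cU: "card (\<Union>A) \<le> m" using le2 by linarith
  have "\<Union>A \<subseteq> {1..Suc m}" using A layerD by blast
  moreover have "\<Union>A \<noteq> {1..Suc m}" using cU by auto
  ultimately obtain x where "x \<in> {1..Suc m}" "x \<notin> \<Union>A" by blast
  then show ?thesis by blast
qed

lemma find_x2:
  assumes A: "A \<subseteq> layer (Suc m) r" and um: "upmin (Suc m) r (layer (Suc m) r - A)"
    and c: "card (layer m r) < card A" and r: "1 \<le> r" "r \<le> m"
  shows "\<exists>x\<in>{1..Suc m}. \<forall>b\<in>layer (Suc m) r - A. x \<in> b"
proof -
  let ?N = "Suc m"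
  define B where "B = layer ?N r - A"
  define E where "E = insert ?N ` layer m (r - 1)"
  have split: "layer ?N r = layer m r \<union> E" unfolding E_def by (rule layer_Suc_split[OF r(1)])
  have disj: "layer m r \<inter> E = {}" unfolding E_def using layer_m_notin by blast
  have fE: "finite E" unfolding E_def using layer_finite by simp
  have cN: "card (layer ?N r) = card (layer m r) + card E"
    unfolding split by (rule card_Un_disjoint[OF layer_finite fE disj])
  have fA: "finite A" using A layer_finite finite_subset by blast
  have "card B = card (layer ?N r) - card A" unfolding B_def
    using A fA by (simp add: card_Diff_subset)
  then have cB: "card B \<le> card E" using cN c by linarith
  obtain G where G: "G \<subseteq> E" "card G = card B" "finite G"
    using obtain_subset_with_card_n[OF cB] by metis
  have "G \<subseteq> layer ?N r" using G split by blast
  then have le: "card (up ?N m B) \<le> card (up ?N m G)" using um r G unfolding upmin_def B_def by blast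
  have "up ?N m G \<subseteq> (\<lambda>y. {1..?N} - {y}) ` {1..m}"
  proof
    fix s assume "s \<in> up ?N m G"
    then obtain g where g: "s \<subseteq> {1..?N}" "card s = m" "g \<in> G" "g \<subseteq> s" unfolding up_def by blast
    have "?N \<in> g" using g(3) G(1) unfolding E_def by blast
    then have Ns: "?N \<in> s" using g by blast
    have fs: "finite s" by (rule finite_subset[OF g(1)]) simp
    have "card ({1..?N} - s) = 1" using g fs by (simp add: card_Diff_subset)
    then obtain y where y: "{1..?N} - s = {y}" using card_1_singletonE by blast
    have "s = {1..?N} - {y}" using y g(1) by blast
    moreover have "y \<in> {1..m}"
    proof -
      have "y \<in> {1..?N} - s" using y by blast
      then have "y \<in> {1..?N}" "y \<noteq> ?N" using Ns by auto
      then show ?thesis by simp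
    qed
    ultimately show "s \<in> (\<lambda>y. {1..?N} - {y}) ` {1..m}" by blast
  qed
  then have "card (up ?N m G) \<le> card ((\<lambda>y. {1..?N} - {y}) ` {1..m})" by (rule card_mono[rotated]) simp
  also have "\<dots> \<le> m" using card_image_le[of "{1..m}" "\<lambda>y. {1..?N} - {y}"] by simp
  finally have le2: "card (up ?N m B) \<le> m" using le by linarith
  define U where "U = {y\<in>{1..?N}. \<exists>b\<in>B. y \<notin> b}"
  have sub: "(\<lambda>y. {1..?N} - {y}) ` U \<subseteq> up ?N m B"
  proof
    fix s assume "s \<in> (\<lambda>y. {1..?N} - {y}) ` U"
    then obtain y b where y: "s = {1..?N} - {y}" "y \<in> {1..?N}" "b \<in> B" "y \<notin> b" unfolding U_def by blast
    have "b \<subseteq> {1..?N}" using y(3) layerD unfolding B_def by blast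
    then have "b \<subseteq> s" using y by blast
    moreover have "card s = m" using y by simp
    ultimately show "s \<in> up ?N m B" using y unfolding up_def by blast
  qed
  have "inj_on (\<lambda>y. {1..?N} - {y}) U"
  proof (rule inj_onI)
    fix y z assume yz: "y \<in> U" "z \<in> U" "{1..?N} - {y} = {1..?N} - {z}"
    show "y = z"
    proof (rule ccontr)
      assume "y \<noteq> z"
      then have "y \<in> {1..?N} - {z}" using yz(1) unfolding U_def by blast
      then show False using yz(3) by blast
    qed
  qed
  then have "card ((\<lambda>y. {1..?N} - {y}) ` U) = card U" by (rule card_image)
  moreover have "card ((\<lambda>y. {1..?N} - {y}) ` U) \<le> card (up ?N m B)"
    by (rule card_mono[OF up_finite sub])
  ultimately have cU: "card U \<le> m" using le2 by linarith
  have "U \<noteq> {1..?N}" using cU by auto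
  moreover have "U \<subseteq> {1..?N}" unfolding U_def by blast
  ultimately obtain x where "x \<in> {1..?N}" "x \<notin> U" by blast
  then show ?thesis unfolding U_def B_def by blast
qed

lemma layer_card_small:
  assumes "r = 0 \<or> n \<le> r"
  shows "card (layer n r) \<le> 1"
proof -
  have "card (layer n r) = n choose r" unfolding layer_def using n_subsets[of "{1..n}" r] by simp
  moreover have "n choose r \<le> 1"
    using assms by (cases "n = r") (auto simp: binomial_eq_0)
  ultimately show ?thesis by simp
qed

lemma main:
  "A \<subseteq> layer n r \<Longrightarrow> lowmin n r A \<Longrightarrow> upmin n r (layer n r - A)
   \<Longrightarrow> \<exists>\<sigma>. \<sigma> permutes {1..n} \<and> colex_initial_segment n r (pimg \<sigma> A)"
proof (induction n arbitrary: r A)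
  case 0
  have "card (layer 0 r) \<le> 1" by (rule layer_card_small) simp
  then have "colex_initial_segment 0 r A" using 0(1) by (rule colex_trivial)
  moreover have "pimg id A = A" unfolding pimg_def by simp
  ultimately have "colex_initial_segment 0 r (pimg id A)" by simp
  then show ?case using permutes_id by blast
next
  case (Suc m)
  let ?N = "Suc m"
  show ?case
  proof (cases "r = 0 \<or> Suc m \<le> r")
    case True
    have "colex_initial_segment (Suc m) r A" by (rule colex_trivial[OF layer_card_small[OF True] Suc.prems(1)])
    moreover have "pimg id A = A" unfolding pimg_def by simp
    ultimately have "colex_initial_segment (Suc m) r (pimg id A)" by simp
    then show ?thesis using permutes_id by blast
  next
    case False
    then have r: "1 \<le> r" "r \<le> m" by auto
    have fA: "finite A" by (rule finite_subset[OF Suc.prems(1) layer_finite])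
    define E where "E = insert ?N ` layer m (r - 1)"
    have split: "layer ?N r = layer m r \<union> E" unfolding E_def by (rule layer_Suc_split[OF r(1)])
    have disj: "layer m r \<inter> E = {}" unfolding E_def using layer_m_notin by blast
    have fE: "finite E" unfolding E_def using layer_finite by simp
    have EN: "\<forall>s\<in>E. ?N \<in> s" unfolding E_def by blast
    show ?thesis
    proof (cases "card A \<le> card (layer m r)")
      case True
      obtain x where x: "x \<in> {1..?N}" "\<forall>f\<in>A. x \<notin> f"
        using find_x1[OF Suc.prems(1) Suc.prems(2) True r(1)] by blast
      define \<tau> where "\<tau> = transpose x ?N"
      have tp: "\<tau> permutes {1..?N}" unfolding \<tau>_def by (rule permutes_swap_id) (use x(1) in auto)
      define A1 where "A1 = pimg \<tau> A"
      have A1N: "A1 \<subseteq> layer ?N r" unfolding A1_def by (rule pimg_layer_sub[OF tp Suc.prems(1)])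
      have A1m: "A1 \<subseteq> layer m r"
      proof
        fix s assume s: "s \<in> A1"
        then obtain f where f: "f \<in> A" "s = \<tau> ` f" unfolding A1_def pimg_def by blast
        have "?N \<notin> s"
        proof
          assume "?N \<in> s"
          then have "?N \<in> \<tau> ` f" using f(2) by simp
          then obtain y where y: "y \<in> f" "\<tau> y = ?N" by (metis imageE)
          then have "y = x" unfolding \<tau>_def by (auto simp: transpose_def split: if_splits)
          then show False using y x f by blast
        qed
        moreover have "s \<in> layer ?N r" using s A1N by blast
        ultimately show "s \<in> layer m r" by (rule layer_down)
      qed
      have lm1: "lowmin ?N r A1" unfolding A1_def by (rule lowmin_pimg[OF tp Suc.prems(2)])
      have um1: "upmin ?N r (layer ?N r - A1)" unfolding A1_def layer_diff_pimg[OF tp]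
        by (rule upmin_pimg[OF tp Suc.prems(3)])
      have lmm: "lowmin m r A1"
        unfolding lowmin_def
      proof (intro allI impI)
        fix k G assume k: "k \<le> r" and G: "G \<subseteq> layer m r \<and> card G = card A1"
        then have "G \<subseteq> layer ?N r" using layer_mono[of m r] by blast
        moreover have "\<forall>k\<le>r. \<forall>G. G \<subseteq> layer ?N r \<and> card G = card A1 \<longrightarrow> card (low k A1) \<le> card (low k G)"
          using lm1 unfolding lowmin_def .
        ultimately show "card (low k A1) \<le> card (low k G)" using k G by blast
      qed
      define B1 where "B1 = layer m r - A1"
      have umm: "upmin m r B1"
        unfolding upmin_def
      proof (intro allI impI)
        fix k G assume k: "r \<le> k" and G: "G \<subseteq> layer m r \<and> card G = card B1"
        have eq1: "layer ?N r - A1 = B1 \<union> E" unfolding B1_def split using A1m disj by blast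
        have fB1: "finite B1" unfolding B1_def using layer_finite by simp
        have fG: "finite G" by (rule finite_subset[OF conjunct1[OF G] layer_finite])
        have dG: "G \<inter> E = {}" using G disj by blast
        have dB: "B1 \<inter> E = {}" using disj unfolding B1_def by blast
        have cGE: "card (G \<union> E) = card (B1 \<union> E)"
          using card_Un_disjoint[OF fG fE dG] card_Un_disjoint[OF fB1 fE dB] G by simp
        have "G \<union> E \<subseteq> layer ?N r" using G split by blast
        moreover have "\<forall>k\<ge>r. \<forall>G. G \<subseteq> layer ?N r \<and> card G = card (layer ?N r - A1) \<longrightarrow>
            card (up ?N k (layer ?N r - A1)) \<le> card (up ?N k G)"
          using um1 unfolding upmin_def .
        ultimately have le: "card (up ?N k (B1 \<union> E)) \<le> card (up ?N k (G \<union> E))"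
          using k cGE unfolding eq1 by blast
        define EK where "EK = {s. s \<subseteq> {1..Suc m} \<and> card s = k \<and> Suc m \<in> s}"
        have fEK: "finite EK" unfolding EK_def by (rule finite_subset[of _ "Pow {1..Suc m}"]) auto
        have d: "up m k F \<inter> EK = {}" for F unfolding EK_def up_def by auto
        have s1: "up ?N k (B1 \<union> E) = up m k B1 \<union> EK"
          unfolding E_def EK_def by (rule up_split) (use r k B1_def in auto)
        have s2: "up ?N k (G \<union> E) = up m k G \<union> EK"
          unfolding E_def EK_def by (rule up_split) (use r k G in auto)
        have "card (up ?N k (B1 \<union> E)) = card (up m k B1) + card EK"
          unfolding s1 by (rule card_Un_disjoint[OF up_finite fEK d])
        moreover have "card (up ?N k (G \<union> E)) = card (up m k G) + card EK"
          unfolding s2 by (rule card_Un_disjoint[OF up_finite fEK d])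
        ultimately show "card (up m k B1) \<le> card (up m k G)" using le by linarith
      qed
      obtain \<sigma>' where s': "\<sigma>' permutes {1..m}" "colex_initial_segment m r (pimg \<sigma>' A1)"
        using Suc.IH[OF A1m lmm umm[unfolded B1_def]] by blast
      have sN: "\<sigma>' permutes {1..?N}" by (rule permutes_subset[OF s'(1)]) auto
      have "(\<sigma>' \<circ> \<tau>) permutes {1..?N}" by (rule permutes_compose[OF tp sN])
      moreover have "pimg (\<sigma>' \<circ> \<tau>) A = pimg \<sigma>' A1" unfolding A1_def pimg_comp ..
      ultimately have "(\<sigma>' \<circ> \<tau>) permutes {1..?N} \<and> colex_initial_segment ?N r (pimg (\<sigma>' \<circ> \<tau>) A)"
        using colex_lift1[OF s'(2)] by simp
      then show ?thesis by blast
    next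
      case False
      then have cA: "card (layer m r) < card A" by simp
      obtain x where x: "x \<in> {1..?N}" "\<forall>b\<in>layer ?N r - A. x \<in> b"
        using find_x2[OF Suc.prems(1) Suc.prems(3) cA r] by blast
      define \<tau> where "\<tau> = transpose x ?N"
      have tp: "\<tau> permutes {1..?N}" unfolding \<tau>_def by (rule permutes_swap_id) (use x(1) in auto)
      define A2 where "A2 = pimg \<tau> A"
      define B2 where "B2 = layer ?N r - A2"
      have A2N: "A2 \<subseteq> layer ?N r" unfolding A2_def by (rule pimg_layer_sub[OF tp Suc.prems(1)])
      have B2eq: "B2 = pimg \<tau> (layer ?N r - A)" unfolding B2_def A2_def by (rule layer_diff_pimg[OF tp])
      have NB2: "\<forall>b\<in>B2. ?N \<in> b"
      proof
        fix b assume "b \<in> B2"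
        then obtain b0 where b0: "b0 \<in> layer ?N r - A" "b = \<tau> ` b0" unfolding B2eq pimg_def by blast
        have tx: "\<tau> x = ?N" unfolding \<tau>_def by simp
        have "x \<in> b0" using x(2) b0(1) by blast
        then have "\<tau> x \<in> b" using b0(2) by blast
        then show "?N \<in> b" using tx by simp
      qed
      define A' where "A' = {s\<in>layer m (r - 1). insert ?N s \<in> A2}"
      define B' where "B' = layer m (r - 1) - A'"
      have A'l: "A' \<subseteq> layer m (r - 1)" unfolding A'_def by blast
      have B'l: "B' \<subseteq> layer m (r - 1)" unfolding B'_def by blast
      have A2eq: "A2 = layer m r \<union> insert ?N ` A'"
      proof
        show "A2 \<subseteq> layer m r \<union> insert ?N ` A'"
        proof
          fix s assume s: "s \<in> A2"
          then have "s \<in> layer m r \<union> E" using A2N split by blast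
          then show "s \<in> layer m r \<union> insert ?N ` A'" unfolding E_def A'_def using s by blast
        qed
        show "layer m r \<union> insert ?N ` A' \<subseteq> A2"
        proof -
          have "layer m r \<subseteq> A2"
          proof
            fix s assume s: "s \<in> layer m r"
            then have "s \<in> layer ?N r" using split by blast
            moreover have "?N \<notin> s" using layer_m_notin[OF s] by simp
            ultimately show "s \<in> A2" using NB2 unfolding B2_def by blast
          qed
          then show ?thesis unfolding A'_def by blast
        qed
      qed
      have B2eq': "B2 = insert ?N ` B'"
      proof
        show "B2 \<subseteq> insert ?N ` B'"
        proof
          fix b assume b: "b \<in> B2"
          then have "b \<in> layer m r \<union> E" using split unfolding B2_def by blast
          moreover have "b \<notin> layer m r" using NB2 b layer_m_notin by blast
          ultimately obtain t where t: "t \<in> layer m (r - 1)" "b = insert ?N t" unfolding E_def by blast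
          then have "t \<notin> A'" using b unfolding B2_def A'_def by blast
          then show "b \<in> insert ?N ` B'" using t unfolding B'_def by blast
        qed
        show "insert ?N ` B' \<subseteq> B2"
        proof
          fix b assume "b \<in> insert ?N ` B'"
          then obtain t where t: "t \<in> layer m (r - 1)" "t \<notin> A'" "b = insert ?N t" unfolding B'_def by blast
          then have "b \<in> layer ?N r" using split unfolding E_def by blast
          moreover have "b \<notin> A2" using t unfolding A'_def by blast
          ultimately show "b \<in> B2" unfolding B2_def by blast
        qed
      qed
      have lm2: "lowmin ?N r A2" unfolding A2_def by (rule lowmin_pimg[OF tp Suc.prems(2)])
      have um2: "upmin ?N r B2" unfolding B2eq by (rule upmin_pimg[OF tp Suc.prems(3)])
      have notinA': "\<forall>s\<in>F. ?N \<notin> s" if "F \<subseteq> layer m j" for F j using that layer_m_notin by blast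
      have lmm: "lowmin m (r - 1) A'"
        unfolding lowmin_def
      proof (intro allI impI)
        fix j G assume j: "j \<le> r - 1" and G: "G \<subseteq> layer m (r - 1) \<and> card G = card A'"
        define G2 where "G2 = layer m r \<union> insert ?N ` G"
        have fG: "finite G" by (rule finite_subset[OF conjunct1[OF G] layer_finite])
        have fA': "finite A'" by (rule finite_subset[OF A'l layer_finite])
        have G2l: "G2 \<subseteq> layer ?N r" unfolding G2_def using G split unfolding E_def by blast
        have d1: "layer m r \<inter> insert ?N ` G = {}" using layer_m_notin by blast
        have d2: "layer m r \<inter> insert ?N ` A' = {}" using layer_m_notin by blast
        have "card G2 = card (layer m r) + card G"
          unfolding G2_def using card_Un_disjoint[OF layer_finite _ d1] fG card_ins[OF notinA'[of G "r - 1"]] G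
           by simp
        moreover have "card A2 = card (layer m r) + card A'"
          unfolding A2eq using card_Un_disjoint[OF layer_finite _ d2] fA' card_ins[OF notinA'[OF A'l]]
           by simp
        ultimately have cG2: "card G2 = card A2" using G by simp
        have le: "card (low (Suc j) A2) \<le> card (low (Suc j) G2)"
          using lm2 G2l cG2 j r unfolding lowmin_def by auto
        define L where "L = low (Suc j) (layer m r)"
        have fL: "finite L" unfolding L_def by (rule low_finite[OF layer_finite subset_refl])
        have sj: "Suc j \<le> r" using j r by simp
        have e1: "low (Suc j) A2 = L \<union> insert ?N ` low j A'"
          unfolding A2eq L_def by (rule low_split[OF A'l r sj])
        have e2: "low (Suc j) G2 = L \<union> insert ?N ` low j G"
          unfolding G2_def L_def by (rule low_split[OF _ r sj]) (use G in blast)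
        have nL: "\<forall>s\<in>low j F. ?N \<notin> s" if "F \<subseteq> layer m (r - 1)" for F
          using that layer_m_notin unfolding low_def by blast
        have nL2: "L \<inter> insert ?N ` low j F = {}" for F
          unfolding L_def low_def using layer_m_notin by blast
        have "card (low (Suc j) A2) = card L + card (low j A')"
          unfolding e1 using card_Un_disjoint[OF fL _ nL2] low_finite[OF fA' A'l] card_ins[OF nL[OF A'l]]
           by simp
        moreover have "card (low (Suc j) G2) = card L + card (low j G)"
          unfolding e2 using card_Un_disjoint[OF fL _ nL2] low_finite[OF fG, of m "r - 1"] G card_ins[OF nL[of G]]
           by simp
        ultimately show "card (low j A') \<le> card (low j G)" using le by linarith
      qed
      have umm: "upmin m (r - 1) B'"
        unfolding upmin_def
      proof (intro allI impI)
        fix j G assume j: "r - 1 \<le> j" and G: "G \<subseteq> layer m (r - 1) \<and> card G = card B'"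
        define G2 where "G2 = insert ?N ` G"
        have G2l: "G2 \<subseteq> layer ?N r" unfolding G2_def using G split unfolding E_def by blast
        have "card G2 = card G" unfolding G2_def by (rule card_ins) (use notinA'[of G "r - 1"] G in blast)
        moreover have "card B2 = card B'" unfolding B2eq' by (rule card_ins) (use notinA'[OF B'l] in blast)
        ultimately have cG2: "card G2 = card B2" using G by simp
        have le: "card (up ?N (Suc j) B2) \<le> card (up ?N (Suc j) G2)"
          using um2 G2l cG2 j r unfolding upmin_def by auto
        have nU: "\<forall>s\<in>up m j F. Suc m \<notin> s" for F unfolding up_def by auto
        have "card (up ?N (Suc j) B2) = card (up m j B')"
          unfolding B2eq' up_ins[OF B'l] by (rule card_ins[OF nU])
        moreover have "card (up ?N (Suc j) G2) = card (up m j G)"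
          unfolding G2_def using G up_ins[of G m "r - 1" j] card_ins[OF nU] by simp
        ultimately show "card (up m j B') \<le> card (up m j G)" using le by linarith
      qed
      obtain \<sigma>' where s': "\<sigma>' permutes {1..m}" "colex_initial_segment m (r - 1) (pimg \<sigma>' A')"
        using Suc.IH[OF A'l lmm umm[unfolded B'_def]] by blast
      have sN: "\<sigma>' permutes {1..?N}" by (rule permutes_subset[OF s'(1)]) auto
      have fixN: "\<sigma>' ?N = ?N" using permutes_not_in[OF s'(1)] by simp
      have "(\<sigma>' \<circ> \<tau>) permutes {1..?N}" by (rule permutes_compose[OF tp sN])
      moreover have "pimg (\<sigma>' \<circ> \<tau>) A = layer m r \<union> insert ?N ` pimg \<sigma>' A'"
      proof -
        have "pimg (\<sigma>' \<circ> \<tau>) A = pimg \<sigma>' A2" unfolding A2_def pimg_comp ..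
        also have "\<dots> = pimg \<sigma>' (layer m r) \<union> pimg \<sigma>' (insert ?N ` A')"
          unfolding A2eq pimg_def by (rule image_Un)
        also have "pimg \<sigma>' (layer m r) = layer m r" by (rule pimg_layer[OF s'(1)])
        also have "pimg \<sigma>' (insert ?N ` A') = insert ?N ` pimg \<sigma>' A'"
          unfolding pimg_def image_image using fixN by simp
        finally show ?thesis .
      qed
      ultimately have "(\<sigma>' \<circ> \<tau>) permutes {1..?N} \<and> colex_initial_segment ?N r (pimg (\<sigma>' \<circ> \<tau>) A)"
        using colex_lift2[OF s'(2) r(1)] by simp
      then show ?thesis by blast
    qed
  qed
qed

theorem corollary7:
  fixes n r :: nat and A B :: "nat set set"
  assumes "A \<subseteq> layer n r"
    and "B = layer n r - A"
    and "\<And>t. t > 0 \<Longrightarrow> lower_shadow_minimal n r t A"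
    and "\<And>t. t > 0 \<Longrightarrow> upper_shadow_minimal n r t B"
  shows "\<exists>C. colex_initial_segment n r C \<and> family_iso n A C"
proof -
  have low_id: "low r F = F" if "F \<subseteq> layer n r" for F
    using lsi_eq[OF that, of 0] by (simp add: lower_shadow_iter_def)
  have up_id: "up n r F = F" if "F \<subseteq> layer n r" for F
    using usi_eq[OF that, of 0] by (simp add: upper_shadow_iter_def)
  have Bl: "B \<subseteq> layer n r" using assms(2) by blast
  have lm: "lowmin n r A"
    unfolding lowmin_def
  proof (intro allI impI)
    fix k G assume k: "k \<le> r" and G: "G \<subseteq> layer n r \<and> card G = card A"
    show "card (low k A) \<le> card (low k G)"
    proof (cases "k = r")
      case True then show ?thesis using low_id[OF assms(1)] low_id[of G] G by simp
    next
      case False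
      then have t: "r - k > 0" using k by simp
      have "card (lower_shadow_iter (r - k) A) \<le> card (lower_shadow_iter (r - k) G)"
        using assms(3)[OF t] G unfolding lower_shadow_minimal_def by blast
      moreover have "lower_shadow_iter (r - k) A = low k A" using lsi_eq[OF assms(1), of "r - k"] k by simp
      moreover have "lower_shadow_iter (r - k) G = low k G" using lsi_eq[of G n r "r - k"] G k by simp
      ultimately show ?thesis by simp
    qed
  qed
  have um: "upmin n r B"
    unfolding upmin_def
  proof (intro allI impI)
    fix k G assume k: "r \<le> k" and G: "G \<subseteq> layer n r \<and> card G = card B"
    show "card (up n k B) \<le> card (up n k G)"
    proof (cases "k = r")
      case True then show ?thesis using up_id[OF Bl] up_id[of G] G by simp
    next
      case False
      then have t: "k - r > 0" using k by simp
      have "card (upper_shadow_iter n (k - r) B) \<le> card (upper_shadow_iter n (k - r) G)"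
        using assms(4)[OF t] G unfolding upper_shadow_minimal_def by blast
      moreover have "upper_shadow_iter n (k - r) B = up n k B" using usi_eq[OF Bl, of "k - r"] k by simp
      moreover have "upper_shadow_iter n (k - r) G = up n k G" using usi_eq[of G n r "k - r"] G k by simp
      ultimately show ?thesis by simp
    qed
  qed
  obtain \<sigma> where s: "\<sigma> permutes {1..n}" "colex_initial_segment n r (pimg \<sigma> A)"
    using main[OF assms(1) lm um[unfolded assms(2)]] by blast
  then show ?thesis unfolding family_iso_def pimg_def by blast
qed

end
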